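(* Let $K\ge2$, $p\in(0,1)$. Then $$J_*^{\mathrm{OA}}:=\sup_{\lambda\in\mathcal P(\mathcal S)}\ \inf_{\sigma\neq\mathrm{id}}\ D_\lambda\big(f^{\mathrm{OA}}_{\mathrm{id}}\,\|\,f^{\mathrm{OA}}_\sigma\big)=\log\!\Big(\frac1p\Big)\cdot\frac{1-p}{K-1+p},$$ where the infimum is over all bijections $\sigma:[K]\to[K]$ other than the identity. Moreover, the supremum is attained at $$\lambda^*(S)=\begin{cases}\dfrac{1-p^{K-n+1}}{K-1+p}&\text{if }S=\{n,n+1,\dots,K\}\text{ for some }n\in\{2,\dots,K-1\},\\[2mm]\dfrac{1-p^K}{(1-p)(K-1+p)}&\text{if }S=[K],\\[2mm] 0&\text{otherwise.}\end{cases}$$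
   Context: Items are $[K]=\{1,\dots,K\}$, $\mathcal S=\{S\subseteq[K]:|S|\ge2\}$, and $\mathcal P(\mathcal S)$ is the set of probability distributions on $\mathcal S$. For a bijection $\sigma:[K]\to[K]$, $S\in\mathcal S$, $i\in S$, let $\sigma(i\mid S)=1+|\{j\in S:\sigma(j)<\sigma(i)\}|$ (local rank) and define the Ordinal Attraction preference $f^{\mathrm{OA}}_\sigma(i\mid S)=\frac{1-p}{1-p^{|S|}}p^{\sigma(i\mid S)-1}$ for $i\in S$. For preferences $f,f'$ (families of positive probability vectors $f(\cdot\mid S)$ on each $S$), $D_S(f\|f')=\sum_{i\in S}f(i\mid S)\log\frac{f(i\mid S)}{f'(i\mid S)}$ and $D_\lambda(f\|f')=\sum_{S\in\mathcal S}\lambda(S)D_S(f\|f')$. *)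

theory Defs
  imports Complex_Main "HOL-Combinatorics.Permutations"
begin

definition subsets_ge2 :: "nat \<Rightarrow> nat set set" where
  "subsets_ge2 K = {S. S \<subseteq> {1..K} \<and> card S \<ge> 2}"

definition local_rank :: "(nat \<Rightarrow> nat) \<Rightarrow> nat set \<Rightarrow> nat \<Rightarrow> nat" where
  "local_rank \<sigma> S i = 1 + card {j \<in> S. \<sigma> j < \<sigma> i}"

definition OA :: "real \<Rightarrow> (nat \<Rightarrow> nat) \<Rightarrow> nat \<Rightarrow> nat set \<Rightarrow> real" where
  "OA p \<sigma> i S = (1 - p) / (1 - p ^ card S) * p ^ (local_rank \<sigma> S i - 1)"

definition KL_S :: "(nat \<Rightarrow> nat set \<Rightarrow> real) \<Rightarrow> (nat \<Rightarrow> nat set \<Rightarrow> real) \<Rightarrow> nat set \<Rightarrow> real" where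
  "KL_S f g S = (\<Sum>i\<in>S. f i S * ln (f i S / g i S))"

definition KL_lam :: "nat \<Rightarrow> (nat set \<Rightarrow> real) \<Rightarrow> (nat \<Rightarrow> nat set \<Rightarrow> real) \<Rightarrow> (nat \<Rightarrow> nat set \<Rightarrow> real) \<Rightarrow> real" where
  "KL_lam K lam f g = (\<Sum>S\<in>subsets_ge2 K. lam S * KL_S f g S)"

definition distributions :: "nat \<Rightarrow> (nat set \<Rightarrow> real) set" where
  "distributions K = {lam. (\<forall>S\<in>subsets_ge2 K. 0 \<le> lam S) \<and> (\<forall>S. S \<notin> subsets_ge2 K \<longrightarrow> lam S = 0)
                          \<and> (\<Sum>S\<in>subsets_ge2 K. lam S) = 1}"

definition nonid_perms :: "nat \<Rightarrow> (nat \<Rightarrow> nat) set" where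
  "nonid_perms K = {\<sigma>. \<sigma> permutes {1..K} \<and> \<sigma> \<noteq> id}"

definition lam_star :: "nat \<Rightarrow> real \<Rightarrow> nat set \<Rightarrow> real" where
  "lam_star K p S =
     (if (\<exists>n. 2 \<le> n \<and> n \<le> K - 1 \<and> S = {n..K})
      then (1 - p ^ (K - Min S + 1)) / (real K - 1 + p)
      else if S = {1..K} then (1 - p ^ K) / ((1 - p) * (real K - 1 + p))
      else 0)"

end

theory Submission
  imports Defs
begin


definition aa :: "nat set \<Rightarrow> nat \<Rightarrow> nat" where "aa S x = card {l\<in>S. l < x}"
definition cc :: "real \<Rightarrow> nat set \<Rightarrow> real" where "cc p S = (1-p)/(1-p^card S)"
definition TT :: "real \<Rightarrow> (nat \<Rightarrow> nat) \<Rightarrow> nat set \<Rightarrow> real" where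
  "TT p \<sigma> S = (\<Sum>i\<in>S. \<Sum>j\<in>S. (if i<j \<and> \<sigma> j < \<sigma> i then OA p id i S - OA p id j S else 0))"

lemma OA_id: "OA p id i S = cc p S * p ^ aa S i"
  by (simp add: OA_def local_rank_def cc_def aa_def)

lemma card_as_sum: "finite S \<Longrightarrow> real (card {j\<in>S. P j}) = (\<Sum>j\<in>S. if P j then 1 else 0)"
  by (simp add: sum.If_cases Int_def conj_commute)

lemma inversion:
  fixes f :: "nat \<Rightarrow> real" and \<sigma> :: "nat \<Rightarrow> nat"
  assumes fin: "finite S" and inj: "inj_on \<sigma> S"
  shows "(\<Sum>i\<in>S. f i * (real (card {j\<in>S. \<sigma> j < \<sigma> i}) - real (card {j\<in>S. j < i})))
       = (\<Sum>i\<in>S. \<Sum>j\<in>S. (if i<j \<and> \<sigma> j < \<sigma> i then f i - f j else 0))"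
proof -
  have pw: "\<And>i j. i \<in> S \<Longrightarrow> j \<in> S \<Longrightarrow>
     f i * ((if \<sigma> j < \<sigma> i then 1 else 0) - (if j < i then 1 else 0))
     = (if i<j \<and> \<sigma> j < \<sigma> i then f i else 0) - (if j<i \<and> \<sigma> i < \<sigma> j then f i else 0)"
  proof -
    fix i j assume ij: "i \<in> S" "j \<in> S"
    show "?thesis i j"
    proof (cases "i = j")
      case False
      then have "\<sigma> i \<noteq> \<sigma> j" using inj ij by (meson inj_onD)
      then show ?thesis using False by (cases "i < j"; cases "\<sigma> j < \<sigma> i") auto
    qed simp
  qed
  have "(\<Sum>i\<in>S. f i * (real (card {j\<in>S. \<sigma> j < \<sigma> i}) - real (card {j\<in>S. j < i})))
     = (\<Sum>i\<in>S. \<Sum>j\<in>S. f i * ((if \<sigma> j < \<sigma> i then 1 else 0) - (if j < i then 1 else 0)))"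
    by (simp add: card_as_sum[OF fin] sum_subtractf[symmetric] sum_distrib_left)
  also have "\<dots> = (\<Sum>i\<in>S. \<Sum>j\<in>S. (if i<j \<and> \<sigma> j < \<sigma> i then f i else 0))
                - (\<Sum>i\<in>S. \<Sum>j\<in>S. (if j<i \<and> \<sigma> i < \<sigma> j then f i else 0))"
    by (simp add: pw sum_subtractf)
  also have "(\<Sum>i\<in>S. \<Sum>j\<in>S. (if j<i \<and> \<sigma> i < \<sigma> j then f i else 0))
           = (\<Sum>i\<in>S. \<Sum>j\<in>S. (if i<j \<and> \<sigma> j < \<sigma> i then f j else 0))"
    by (rule sum.swap)
  finally show ?thesis by (simp add: sum_subtractf[symmetric] if_distrib cong: if_cong)
qed

lemma cc_pos: "0<p \<Longrightarrow> p<1 \<Longrightarrow> card S \<ge> 1 \<Longrightarrow> cc p S > 0"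
  unfolding cc_def by (simp add: power_less_one_iff)

lemma aa_mono: "finite S \<Longrightarrow> i \<le> j \<Longrightarrow> aa S i \<le> aa S j"
  unfolding aa_def by (rule card_mono) auto

lemma OA_anti: "finite S \<Longrightarrow> card S \<ge> 1 \<Longrightarrow> 0<p \<Longrightarrow> p<1 \<Longrightarrow> i \<le> j \<Longrightarrow> OA p id j S \<le> OA p id i S"
  unfolding OA_id
  by (intro mult_left_mono power_decreasing aa_mono less_imp_le[OF cc_pos]) auto

lemma aa_Suc: "finite S \<Longrightarrow> k \<in> S \<Longrightarrow> aa S (Suc k) = Suc (aa S k)"
proof -
  assume "finite S" "k \<in> S"
  then have "{l\<in>S. l < Suc k} = insert k {l\<in>S. l<k}" by auto
  then show ?thesis using \<open>finite S\<close> unfolding aa_def by simp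
qed

lemma KL_S_eq:
  assumes fin: "finite S" and ne: "card S \<ge> 1" and inj: "inj_on \<sigma> S" and p: "0<p" "p<1"
  shows "KL_S (OA p id) (OA p \<sigma>) S = ln (1/p) * TT p \<sigma> S"
proof -
  have c: "cc p S > 0" using cc_pos p ne by blast
  have "\<And>i. OA p \<sigma> i S = cc p S * p ^ card {j\<in>S. \<sigma> j < \<sigma> i}"
    by (simp add: OA_def local_rank_def cc_def)
  then have l: "\<And>i. ln (OA p id i S / OA p \<sigma> i S)
      = ln (1/p) * (real (card {j\<in>S. \<sigma> j < \<sigma> i}) - real (card {j\<in>S. j < i}))"
    using c p by (simp add: OA_id aa_def ln_div ln_realpow ln_inverse algebra_simps)
  have "KL_S (OA p id) (OA p \<sigma>) S
     = ln (1/p) * (\<Sum>i\<in>S. OA p id i S * (real (card {j\<in>S. \<sigma> j < \<sigma> i}) - real (card {j\<in>S. j < i})))"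
    unfolding KL_S_def l by (simp add: sum_distrib_left algebra_simps)
  also have "\<dots> = ln (1/p) * TT p \<sigma> S"
    unfolding TT_def using inversion[OF fin inj] by simp
  finally show ?thesis .
qed

lemma TT_term_nonneg:
  assumes "finite S" "card S \<ge> 1" "0<p" "p<1"
  shows "0 \<le> (if i<j \<and> \<sigma> j < \<sigma> i then OA p id i S - OA p id j S else 0)"
  using OA_anti[OF assms, of i j] by auto

lemma TT_ge:
  assumes fin: "finite S" and ne: "card S \<ge> 1" and p: "0<p" "p<1"
    and k: "k \<in> S" "Suc k \<in> S" and s: "\<sigma> (Suc k) < \<sigma> k"
  shows "OA p id k S - OA p id (Suc k) S \<le> TT p \<sigma> S"
proof -
  let ?g = "\<lambda>i j. (if i<j \<and> \<sigma> j < \<sigma> i then OA p id i S - OA p id j S else 0)"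
  have "OA p id k S - OA p id (Suc k) S = ?g k (Suc k)" using s by simp
  also have "\<dots> \<le> (\<Sum>j\<in>S. ?g k j)"
    by (rule member_le_sum[OF k(2)]) (simp_all add: fin TT_term_nonneg[OF fin ne p])
  also have "\<dots> \<le> (\<Sum>i\<in>S. \<Sum>j\<in>S. ?g i j)"
    by (rule member_le_sum[OF k(1)]) (simp_all add: fin TT_term_nonneg[OF fin ne p] sum_nonneg)
  finally show ?thesis unfolding TT_def .
qed

lemma TT_nonneg:
  assumes fin: "finite S" and ne: "card S \<ge> 1" and p: "0<p" "p<1"
  shows "0 \<le> TT p \<sigma> S"
  unfolding TT_def by (intro sum_nonneg TT_term_nonneg[OF fin ne p])

lemma TT_transp:
  assumes fin: "finite S"
  shows "TT p (Transposition.transpose k (Suc k)) S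
       = (if k \<in> S \<and> Suc k \<in> S then OA p id k S - OA p id (Suc k) S else 0)"
proof -
  let ?t = "Transposition.transpose k (Suc k)"
  have e: "\<And>i j. (i<j \<and> ?t j < ?t i) = (i = k \<and> j = Suc k)"
    by (auto simp: Transposition.transpose_def)
  let ?v = "OA p id k S - OA p id (Suc k) S"
  have "TT p ?t S = (\<Sum>i\<in>S. (if i = k then (if Suc k \<in> S then ?v else 0) else 0))"
    unfolding TT_def e
  proof (intro sum.cong refl)
    fix i assume "i \<in> S"
    show "(\<Sum>j\<in>S. if i = k \<and> j = Suc k then OA p id i S - OA p id j S else 0)
         = (if i = k then (if Suc k \<in> S then ?v else 0) else 0)"
      using fin by (cases "i = k") (simp_all add: sum.delta)
  qed
  also have "\<dots> = (if k \<in> S \<and> Suc k \<in> S then ?v else 0)"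
    using fin by (simp add: sum.delta)
  finally show ?thesis .
qed



lemma geo1: "p ^ j + (\<Sum>n\<in>{2..Suc j}. (1-p) * p ^ (Suc j - n)) = (1::real)"
proof (induction j)
  case 0 then show ?case by simp
next
  case (Suc j)
  have s: "{2..Suc (Suc j)} = insert (Suc (Suc j)) {2..Suc j}" by auto
  have "(\<Sum>n\<in>{2..Suc j}. (1-p) * p ^ (Suc (Suc j) - n)) = p * (\<Sum>n\<in>{2..Suc j}. (1-p) * p ^ (Suc j - n))"
    unfolding sum_distrib_left by (intro sum.cong refl) (simp add: Suc_diff_le)
  moreover have "(\<Sum>n\<in>{2..Suc (Suc j)}. (1-p) * p ^ (Suc (Suc j) - n))
     = (1-p) + (\<Sum>n\<in>{2..Suc j}. (1-p) * p ^ (Suc (Suc j) - n))"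
    unfolding s by (subst sum.insert) auto
  ultimately have "(\<Sum>n\<in>{2..Suc (Suc j)}. (1-p) * p ^ (Suc (Suc j) - n))
     = (1-p) + p * (\<Sum>n\<in>{2..Suc j}. (1-p) * p ^ (Suc j - n))" by simp
  moreover have h: "\<And>X Y. Y = (1-p) + p*X \<Longrightarrow> p^j + X = 1 \<Longrightarrow> p^Suc j + Y = (1::real)"
  proof -
    fix X Y :: real assume "Y = (1-p) + p*X" "p^j + X = 1"
    then have "Y = (1-p) + p*(1 - p^j)" by simp
    then show "p^Suc j + Y = 1" by (simp add: algebra_simps)
  qed
  ultimately show ?case using Suc.IH by blast
qed

lemma geo2: "(\<Sum>i\<in>{2..Suc j}. 1 - p ^ i) + (\<Sum>i<Suc (Suc j). p ^ i) = real j + 1 + (p::real)"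
proof (induction j)
  case 0 then show ?case by simp
next
  case (Suc j)
  have s: "{2..Suc (Suc j)} = insert (Suc (Suc j)) {2..Suc j}" by auto
  have "(\<Sum>i\<in>{2..Suc (Suc j)}. 1 - p ^ i) = (1 - p^Suc (Suc j)) + (\<Sum>i\<in>{2..Suc j}. 1 - p ^ i)"
    unfolding s by (subst sum.insert) auto
  moreover have h: "\<And>X Y Z. Y = (1 - p^Suc (Suc j)) + X \<Longrightarrow> X + Z = real j + 1 + p \<Longrightarrow>
     Y + (Z + p^Suc (Suc j)) = real (Suc j) + 1 + p" by simp
  moreover have "(\<Sum>i<Suc (Suc (Suc j)). p ^ i) = (\<Sum>i<Suc (Suc j). p ^ i) + p^Suc (Suc j)" by simp
  ultimately show ?case using Suc.IH by metis
qed

lemma finite_subsets: "finite (subsets_ge2 K)"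
  by (rule finite_subset[of _ "Pow {1..K}"]) (auto simp: subsets_ge2_def)

lemma subsets_props: "S \<in> subsets_ge2 K \<Longrightarrow> finite S \<and> card S \<ge> 1 \<and> card S \<ge> 2 \<and> S \<subseteq> {1..K}"
  unfolding subsets_ge2_def by (auto intro: finite_subset)

lemma D_eq:
  assumes "\<sigma> permutes {1..K}" "0<p" "p<1"
  shows "KL_lam K lam (OA p id) (OA p \<sigma>) = (\<Sum>S\<in>subsets_ge2 K. lam S * (ln (1/p) * TT p \<sigma> S))"
  unfolding KL_lam_def
proof (intro sum.cong refl)
  fix S assume "S \<in> subsets_ge2 K"
  then have "finite S" "card S \<ge> 1" using subsets_props by blast+
  moreover have "inj_on \<sigma> S" using permutes_inj[OF assms(1)] by (simp add: inj_on_def inj_def)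
  ultimately show "lam S * KL_S (OA p id) (OA p \<sigma>) S = lam S * (ln (1/p) * TT p \<sigma> S)"
    using KL_S_eq assms by simp
qed

lemma exists_desc:
  assumes perm: "\<sigma> permutes {1..K}" and ne: "\<sigma> \<noteq> id"
  shows "\<exists>k. 1 \<le> k \<and> k < K \<and> \<sigma> (Suc k) < \<sigma> k"
proof (rule ccontr)
  assume "\<not> ?thesis"
  then have mono: "\<And>k. 1 \<le> k \<Longrightarrow> k < K \<Longrightarrow> \<sigma> k < \<sigma> (Suc k)"
    using permutes_inj[OF perm] by (metis inj_eq linorder_neqE_nat n_not_Suc_n)
  have inr: "\<And>i. i \<in> {1..K} \<Longrightarrow> \<sigma> i \<in> {1..K}" using permutes_in_image[OF perm] by blast
  have ge: "\<And>i. 1 \<le> i \<Longrightarrow> i \<le> K \<Longrightarrow> i \<le> \<sigma> i"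
  proof -
    fix i assume "1 \<le> i" "i \<le> K"
    then show "i \<le> \<sigma> i"
    proof (induction i rule: dec_induct)
      case base then show ?case using inr[of 1] by auto
    next
      case (step n) then show ?case using mono[of n] by auto
    qed
  qed
  have le: "\<And>d. d < K \<Longrightarrow> \<sigma> (K - d) \<le> K - d"
  proof -
    fix d show "d < K \<Longrightarrow> \<sigma> (K - d) \<le> K - d"
    proof (induction d)
      case 0 then show ?case using inr[of K] by auto
    next
      case (Suc d)
      then have "\<sigma> (K - Suc d) < \<sigma> (Suc (K - Suc d))" by (intro mono) auto
      moreover have "Suc (K - Suc d) = K - d" using Suc by auto
      ultimately show ?case using Suc by auto
    qed
  qed
  have "\<And>i. \<sigma> i = i"
  proof -
    fix i show "\<sigma> i = i"
    proof (cases "i \<in> {1..K}")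
      case True
      then have "\<sigma> (K - (K - i)) \<le> K - (K - i)" using le[of "K - i"] by auto
      then show ?thesis using True ge[of i] by auto
    next
      case False then show ?thesis using permutes_not_in[OF perm] by blast
    qed
  qed
  then show False using ne by auto
qed



lemma lamstar_zero:
  assumes "S \<notin> (\<lambda>n. {n..K}) ` {1..K-1}" "K \<ge> 2"
  shows "lam_star K p S = 0"
proof -
  have "\<not> (\<exists>n. 2 \<le> n \<and> n \<le> K - 1 \<and> S = {n..K})" using assms by auto
  moreover have "S \<noteq> {1..K}" using assms by auto
  ultimately show ?thesis unfolding lam_star_def by (simp only: if_False)
qed

lemma lamstar_val:
  assumes "n \<in> {1..K-1}" "K \<ge> 2"
  shows "lam_star K p {n..K} = (if n = 1 then (1-p^K)/((1-p)*(real K-1+p)) else (1-p^(K+1-n))/(real K-1+p))"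
proof (cases "n = 1")
  case True
  have "\<not> (\<exists>m. 2 \<le> m \<and> m \<le> K - 1 \<and> {1..K} = {m..K})"
    using assms by (auto simp: Icc_eq_Icc)
  then show ?thesis using True unfolding lam_star_def by (simp only: if_False if_True simp_thms)
next
  case False
  then have ex: "\<exists>m. 2 \<le> m \<and> m \<le> K - 1 \<and> {n..K} = {m..K}" using assms by (intro exI[of _ n]) auto
  have mn: "Min {n..K} = n" using assms by (intro Min_eqI) auto
  have e: "K - n + 1 = K + 1 - n" using assms by auto
  show ?thesis using False assms unfolding lam_star_def if_P[OF ex] mn e by simp
qed

lemma sum_lamstar:
  assumes "K \<ge> 2"
  shows "(\<Sum>S\<in>subsets_ge2 K. lam_star K p S * g S) = (\<Sum>n\<in>{1..K-1}. lam_star K p {n..K} * g {n..K})"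
proof -
  have sub: "(\<lambda>n. {n..K}) ` {1..K-1} \<subseteq> subsets_ge2 K"
    using assms by (auto simp: subsets_ge2_def)
  have "(\<Sum>S\<in>subsets_ge2 K. lam_star K p S * g S) = (\<Sum>S\<in>(\<lambda>n. {n..K}) ` {1..K-1}. lam_star K p S * g S)"
    by (rule sum.mono_neutral_right[OF finite_subsets sub]) (use lamstar_zero assms in auto)
  also have "\<dots> = (\<Sum>n\<in>{1..K-1}. lam_star K p {n..K} * g {n..K})"
    by (rule sum.reindex_cong[where l="\<lambda>n. {n..K}"]) (auto simp: inj_on_def Icc_eq_Icc)
  finally show ?thesis .
qed

lemma lamstar_dist:
  assumes K: "K \<ge> 2" and p: "0<p" "p<1"
  shows "lam_star K p \<in> distributions K"
proof -
  have pos: "real K - 1 + p > 0" using K p by simp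
  have pm: "\<And>m. 0 \<le> 1 - p^m" using p by (simp add: power_le_one)
  have nn: "\<And>S. 0 \<le> lam_star K p S"
    unfolding lam_star_def using pos p pm pm[of K] 
    by (simp add: divide_nonneg_pos mult_pos_pos del: power_Suc)
  have "(\<Sum>S\<in>subsets_ge2 K. lam_star K p S) = (\<Sum>n\<in>{1..K-1}. lam_star K p {n..K})"
    using sum_lamstar[OF K, of p "\<lambda>_. 1"] by simp
  also have "\<dots> = lam_star K p {1..K} + (\<Sum>n\<in>{2..K-1}. lam_star K p {n..K})"
  proof -
    have "{1..K-1} = insert 1 {2..K-1}" using K by auto
    then show ?thesis by simp
  qed
  also have "\<dots> = (1-p^K)/((1-p)*(real K-1+p)) + (\<Sum>n\<in>{2..K-1}. (1-p^(K+1-n))/(real K-1+p))"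
  proof -
    have "lam_star K p {1..K} = (1-p^K)/((1-p)*(real K-1+p))" using lamstar_val[of 1 K p] K by simp
    moreover have "(\<Sum>n\<in>{2..K-1}. lam_star K p {n..K}) = (\<Sum>n\<in>{2..K-1}. (1-p^(K+1-n))/(real K-1+p))"
    proof (rule sum.cong[OF refl])
      fix n assume "n \<in> {2..K-1}"
      then show "lam_star K p {n..K} = (1-p^(K+1-n))/(real K-1+p)" using lamstar_val[of n K p] K by simp
    qed
    ultimately show ?thesis by simp
  qed
  also have "\<dots> = ((\<Sum>i<K. p ^ i) + (\<Sum>n\<in>{2..K-1}. 1-p^(K+1-n))) / (real K-1+p)"
    using p one_diff_power_eq[of p K] by (simp add: sum_divide_distrib add_divide_distrib)
  also have "(\<Sum>n\<in>{2..K-1}. 1-p^(K+1-n)) = (\<Sum>i\<in>{2..K-1}. 1-p^i)"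
    by (subst sum.atLeastAtMost_rev) (intro sum.cong refl, auto)
  also have "(\<Sum>i<K. p ^ i) + (\<Sum>i\<in>{2..K-1}. 1-p^i) = real K - 1 + p"
  proof -
    obtain j where j: "K = Suc (Suc j)" using K by (metis add_2_eq_Suc le_Suc_ex)
    show ?thesis using geo2[where j=j and p=p] unfolding j by simp
  qed
  finally have "(\<Sum>S\<in>subsets_ge2 K. lam_star K p S) = 1" using pos by simp
  moreover have "\<And>S. S \<notin> subsets_ge2 K \<Longrightarrow> lam_star K p S = 0"
  proof -
    have sub2: "(\<lambda>n. {n..K}) ` {1..K-1} \<subseteq> subsets_ge2 K" using K by (auto simp: subsets_ge2_def)
    fix S assume "S \<notin> subsets_ge2 K"
    then show "lam_star K p S = 0" using lamstar_zero[OF _ K] sub2 by blast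
  qed
  ultimately show ?thesis unfolding distributions_def using nn by auto
qed



abbreviation tau :: "nat \<Rightarrow> nat \<Rightarrow> nat" where "tau k \<equiv> Transposition.transpose k (Suc k)"

lemma tau_perm: "1 \<le> k \<Longrightarrow> k < K \<Longrightarrow> tau k permutes {1..K}"
  by (rule permutes_swap_id) auto

lemma tau_nonid: "1 \<le> k \<Longrightarrow> k < K \<Longrightarrow> tau k \<in> nonid_perms K"
  unfolding nonid_perms_def using tau_perm by (auto simp: transpose_eq_id_iff)

lemma TT_Sn:
  assumes n: "n \<in> {1..K-1}" and k: "1 \<le> k" "k < K"
  shows "TT p (tau k) {n..K} = (if n \<le> k then cc p {n..K} * p^(k-n) * (1-p) else 0)"
proof (cases "n \<le> k")
  case True
  have a: "aa {n..K} k = k - n"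
  proof -
    have "{l\<in>{n..K}. l < k} = {n..<k}" using k by auto
    then show ?thesis unfolding aa_def by simp
  qed
  have in1: "k \<in> {n..K}" "Suc k \<in> {n..K}" using True k by auto
  have "TT p (tau k) {n..K} = OA p id k {n..K} - OA p id (Suc k) {n..K}"
    using TT_transp[of "{n..K}" p k] in1 by simp
  also have "\<dots> = cc p {n..K} * p^(k-n) * (1-p)"
    unfolding OA_id aa_Suc[OF finite_atLeastAtMost in1(1)] a by (simp add: algebra_simps)
  finally show ?thesis using True by simp
next
  case False
  then show ?thesis using TT_transp[of "{n..K}" p k] by simp
qed

lemma term_n:
  assumes n: "n \<in> {1..K-1}" and k: "1 \<le> k" "k < K" and p: "0<p" "p<1" and K: "K \<ge> 2"
  shows "lam_star K p {n..K} * TT p (tau k) {n..K} =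
     (if n \<le> k then (if n = 1 then p^(k-1) else (1-p) * p^(k-n)) * ((1-p)/(real K-1+p)) else 0)"
proof -
  have pos: "real K - 1 + p > 0" using K p by simp
  have cd: "card {n..K} = K + 1 - n" by simp
  have "p^(K+1-n) \<le> p^1" using p n by (intro power_decreasing) auto
  then have nz: "1 - p^(K+1-n) \<noteq> 0" using p by simp
  have "p^K \<le> p^1" using p K by (intro power_decreasing) auto
  then have nz2: "1 - p^K \<noteq> 0" using p by simp
  have p1: "1 - p \<noteq> 0" using p by simp
  have g1: "\<And>A X q. A \<noteq> 0 \<Longrightarrow> X \<noteq> 0 \<Longrightarrow> A/((1-p)*X) * ((1-p)/A * q * (1-p)) = q * ((1-p)/X)"
    using p1 by (simp add: field_simps)
  have g2: "\<And>A X q. A \<noteq> 0 \<Longrightarrow> X \<noteq> 0 \<Longrightarrow> A/X * ((1-p)/A * q * (1-p)) = (1-p) * q * ((1-p)/X)"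
    by (simp add: field_simps)
  show ?thesis
  proof (cases "n \<le> k")
    case True
    show ?thesis
    proof (cases "n = 1")
      case True
      then show ?thesis using \<open>n \<le> k\<close> g1[OF nz2, of "real K - 1 + p" "p^(k-1)"] pos
        unfolding TT_Sn[OF n k] lamstar_val[OF n K] cc_def cd by simp
    next
      case False
      then show ?thesis using \<open>n \<le> k\<close> g2[OF nz, of "real K - 1 + p" "p^(k-n)"] pos
        unfolding TT_Sn[OF n k] lamstar_val[OF n K] cc_def cd by simp
    qed
  next
    case False
    then show ?thesis unfolding TT_Sn[OF n k] by simp
  qed
qed

lemma D_star_tau:
  assumes k: "1 \<le> k" "k < K" and p: "0<p" "p<1" and K: "K \<ge> 2"
  shows "KL_lam K (lam_star K p) (OA p id) (OA p (tau k)) = ln (1 / p) * ((1 - p) / (real K - 1 + p))"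
proof -
  let ?V = "(1-p)/(real K-1+p)"
  have "KL_lam K (lam_star K p) (OA p id) (OA p (tau k))
      = (\<Sum>S\<in>subsets_ge2 K. lam_star K p S * TT p (tau k) S) * ln (1/p)"
    unfolding D_eq[OF tau_perm[OF k] p] by (simp add: sum_distrib_left mult.left_commute mult.commute)
  also have "(\<Sum>S\<in>subsets_ge2 K. lam_star K p S * TT p (tau k) S)
     = (\<Sum>n\<in>{1..K-1}. (if n \<le> k then (if n = 1 then p^(k-1) else (1-p) * p^(k-n)) * ?V else 0))"
    unfolding sum_lamstar[OF K] by (intro sum.cong refl term_n) (use k p K in auto)
  also have "\<dots> = (\<Sum>n\<in>{1..k}. (if n = 1 then p^(k-1) else (1-p) * p^(k-n)) * ?V)"
  proof -
    have "{1..k} \<subseteq> {1..K-1}" using k by auto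
    then show ?thesis by (intro sum.mono_neutral_cong_right) auto
  qed
  also have "\<dots> = (p^(k-1) + (\<Sum>n\<in>{2..k}. (1-p) * p^(k-n))) * ?V"
  proof -
    have "{1..k} = insert 1 {2..k}" using k by auto
    then show ?thesis by (simp add: distrib_right sum_distrib_right add_divide_distrib sum_divide_distrib)
  qed
  also have "p^(k-1) + (\<Sum>n\<in>{2..k}. (1-p) * p^(k-n)) = 1"
  proof -
    obtain j where j: "k = Suc j" using k by (metis Suc_le_D One_nat_def)
    show ?thesis using geo1[where j=j and p=p] unfolding j by simp
  qed
  finally show ?thesis by (simp only: mult_1 mult.commute)
qed



lemma TT_le:
  assumes fin: "finite S" and ne: "card S \<ge> 1" and p: "0<p" "p<1"
  shows "TT p (tau k) S \<le> OA p id k S - OA p id (Suc k) S"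
  using TT_transp[OF fin, of p k] OA_anti[OF fin ne p, of k "Suc k"] by auto

lemma Q_bound:
  assumes S: "S \<in> subsets_ge2 K" and K: "K \<ge> 2" and p: "0<p" "p<1"
  shows "(\<Sum>k\<in>{1..<K-1}. TT p (tau k) S) + (1+p) * TT p (tau (K-1)) S \<le> 1-p"
proof -
  have fin: "finite S" and ne: "card S \<ge> 1" and m2: "card S \<ge> 2" and sub: "S \<subseteq> {1..K}"
    using subsets_props[OF S] by auto
  define g where "g x = OA p id x S" for x
  define c where "c = cc p S"
  define m where "m = card S"
  have gx: "\<And>x. g x = c * p ^ aa S x" unfolding g_def c_def OA_id ..
  have cpos: "c > 0" unfolding c_def using cc_pos ne p by blast
  have cm: "c * (1 - p^m) = 1 - p"
  proof -
    have "p^m \<le> p^1" using p m2 unfolding m_def by (intro power_decreasing) auto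
    then have "1 - p^m \<noteq> 0" using p by simp
    then show ?thesis unfolding c_def cc_def m_def by simp
  qed
  have a1: "aa S 1 = 0" unfolding aa_def using sub by auto
  have g1: "g 1 = c" using gx a1 by simp
  have "(\<Sum>k\<in>{1..<K-1}. TT p (tau k) S) \<le> (\<Sum>k\<in>{1..<K-1}. g k - g (Suc k))"
    unfolding g_def by (intro sum_mono TT_le fin ne p)
  also have "\<dots> = g 1 - g (K-1)"
    using sum_Suc_diff'[of 1 "K-1" "\<lambda>i. - g i"] K by simp
  finally have s1: "(\<Sum>k\<in>{1..<K-1}. TT p (tau k) S) \<le> c - g (K-1)" using g1 by simp
  have sK: "Suc (K-1) = K" using K by simp
  show ?thesis
  proof (cases "K-1 \<in> S \<and> K \<in> S")
    case True
    have t: "TT p (tau (K-1)) S = g (K-1) - g K"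
      using TT_transp[OF fin, of p "K-1"] True unfolding g_def sK by simp
    have "{l\<in>S. l < K} = S - {K}" using sub by auto
    then have aK: "aa S K = m - 1" unfolding aa_def m_def using True fin by simp
    have "{l\<in>S. l < K-1} = S - {K-1, K}" using sub by (auto simp: subset_iff)
    then have aK1: "aa S (K-1) = m - 2" unfolding aa_def m_def using True fin K
      by (simp add: card_Diff_subset)
    have e1: "p * p^(m-2) = p^(m-1)" using m2 unfolding m_def
      by (metis Suc_diff_Suc numeral_2_eq_2 One_nat_def Suc_le_lessD power_Suc diff_Suc_1 less_le_trans le_refl)
    have e2: "p * p^(m-1) = p^m" using m2 unfolding m_def
      by (metis Suc_diff_1 power_Suc less_le_trans zero_less_numeral)
    have "(\<Sum>k\<in>{1..<K-1}. TT p (tau k) S) + (1+p) * TT p (tau (K-1)) S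
        \<le> c - g (K-1) + (1+p) * (g (K-1) - g K)" using s1 t by simp
    also have "\<dots> = c + c * (p * p^(m-2)) - c * p^(m-1) - c * (p * p^(m-1))"
      unfolding gx aK aK1 by (simp add: algebra_simps)
    also have "\<dots> = c * (1 - p^m)" unfolding e1 e2 by (simp add: algebra_simps)
    finally show ?thesis using cm by simp
  next
    case False
    then have t: "TT p (tau (K-1)) S = 0"
      using TT_transp[OF fin, of p "K-1"] unfolding sK by auto
    have "aa S (K-1) \<le> m" unfolding aa_def m_def using fin by (intro card_mono) auto
    then have "p^m \<le> p^(aa S (K-1))" using p by (intro power_decreasing) auto
    then have "c - g (K-1) \<le> c * (1 - p^m)" unfolding gx using cpos by (simp add: algebra_simps)
    then show ?thesis using s1 t cm by simp
  qed
qed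



lemma lower:
  assumes lam: "lam \<in> distributions K" and s: "\<sigma> \<in> nonid_perms K" and p: "0<p" "p<1"
  shows "\<exists>k. 1 \<le> k \<and> k < K \<and>
     KL_lam K lam (OA p id) (OA p (tau k)) \<le> KL_lam K lam (OA p id) (OA p \<sigma>)"
proof -
  have perm: "\<sigma> permutes {1..K}" and ne: "\<sigma> \<noteq> id" using s unfolding nonid_perms_def by auto
  obtain k where k: "1 \<le> k" "k < K" "\<sigma> (Suc k) < \<sigma> k" using exists_desc[OF perm ne] by blast
  have L: "ln (1/p) \<ge> 0" using p by simp
  have "KL_lam K lam (OA p id) (OA p (tau k)) \<le> KL_lam K lam (OA p id) (OA p \<sigma>)"
    unfolding D_eq[OF tau_perm[OF k(1,2)] p] D_eq[OF perm p]
  proof (intro sum_mono)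
    fix S assume S: "S \<in> subsets_ge2 K"
    then have l0: "0 \<le> lam S" using lam unfolding distributions_def by auto
    have fin: "finite S" and ne: "card S \<ge> 1" using subsets_props[OF S] by auto
    have "TT p (tau k) S \<le> TT p \<sigma> S"
      using TT_transp[OF fin, of p k] TT_ge[OF fin ne p _ _ k(3)] TT_nonneg[OF fin ne p, of \<sigma>]
      by auto
    then have "ln (1/p) * TT p (tau k) S \<le> ln (1/p) * TT p \<sigma> S" using L by (rule mult_left_mono)
    then show "lam S * (ln (1/p) * TT p (tau k) S) \<le> lam S * (ln (1/p) * TT p \<sigma> S)" using l0 by (rule mult_left_mono)
  qed
  then show ?thesis using k by blast
qed

lemma upper:
  assumes lam: "lam \<in> distributions K" and K: "K \<ge> 2" and p: "0<p" "p<1"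
  shows "\<exists>k. 1 \<le> k \<and> k < K \<and>
     KL_lam K lam (OA p id) (OA p (tau k)) \<le> ln (1 / p) * ((1 - p) / (real K - 1 + p))"
proof (rule ccontr)
  let ?V = "ln (1 / p) * ((1 - p) / (real K - 1 + p))"
  let ?D = "\<lambda>k. KL_lam K lam (OA p id) (OA p (tau k))"
  let ?L = "ln (1/p)"
  assume "\<not> ?thesis"
  then have gt: "\<And>k. 1 \<le> k \<Longrightarrow> k < K \<Longrightarrow> ?D k > ?V" by force
  have pos: "real K - 1 + p > 0" using K p by simp
  have L: "?L > 0" using p by simp
  have lnn: "\<And>S. S \<in> subsets_ge2 K \<Longrightarrow> 0 \<le> lam S" and ls: "(\<Sum>S\<in>subsets_ge2 K. lam S) = 1"
    using lam unfolding distributions_def by auto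
  have e1: "(\<Sum>k\<in>{1..<K-1}. ?D k) = (\<Sum>S\<in>subsets_ge2 K. lam S * ?L * (\<Sum>k\<in>{1..<K-1}. TT p (tau k) S))"
  proof -
    have "(\<Sum>k\<in>{1..<K-1}. ?D k) = (\<Sum>k\<in>{1..<K-1}. \<Sum>S\<in>subsets_ge2 K. lam S * (?L * TT p (tau k) S))"
      by (intro sum.cong refl D_eq tau_perm p) auto
    also have "\<dots> = (\<Sum>S\<in>subsets_ge2 K. \<Sum>k\<in>{1..<K-1}. lam S * (?L * TT p (tau k) S))"
      by (rule sum.swap)
    also have "\<dots> = (\<Sum>S\<in>subsets_ge2 K. lam S * ?L * (\<Sum>k\<in>{1..<K-1}. TT p (tau k) S))"
      by (simp add: sum_distrib_left mult.assoc)
    finally show ?thesis .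
  qed
  have e2: "(1+p) * ?D (K-1) = (\<Sum>S\<in>subsets_ge2 K. lam S * ?L * ((1+p) * TT p (tau (K-1)) S))"
  proof -
    have pk: "tau (K-1) permutes {1..K}" using K by (intro tau_perm) auto
    show ?thesis unfolding D_eq[OF pk p] by (simp add: sum_distrib_left mult.assoc mult.left_commute)
  qed
  have "(\<Sum>k\<in>{1..<K-1}. ?D k) + (1+p) * ?D (K-1)
      = (\<Sum>S\<in>subsets_ge2 K. lam S * ?L * ((\<Sum>k\<in>{1..<K-1}. TT p (tau k) S) + (1+p) * TT p (tau (K-1)) S))"
    unfolding e1 e2 by (simp add: sum.distrib distrib_left)
  also have "\<dots> \<le> (\<Sum>S\<in>subsets_ge2 K. lam S * ?L * (1-p))"
    by (intro sum_mono mult_left_mono Q_bound K p) (use lnn L in auto)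
  also have "\<dots> = (\<Sum>S\<in>subsets_ge2 K. lam S) * (?L * (1-p))"
    by (simp add: sum_distrib_right mult.assoc)
  also have "\<dots> = ?L * (1-p)" using ls by simp
  finally have up: "(\<Sum>k\<in>{1..<K-1}. ?D k) + (1+p) * ?D (K-1) \<le> ?L * (1-p)" .
  have "(\<Sum>k\<in>{1..<K-1}. ?V) \<le> (\<Sum>k\<in>{1..<K-1}. ?D k)"
  proof (rule sum_mono)
    fix k assume "k \<in> {1..<K-1}"
    then have "1 \<le> k" "k < K" by auto
    then show "?V \<le> ?D k" using gt[of k] by (simp only: less_imp_le)
  qed
  moreover have "(1+p) * ?V < (1+p) * ?D (K-1)"
  proof (rule mult_strict_left_mono)
    show "?V < ?D (K-1)" using gt[of "K-1"] K by simp
  qed (use p in simp)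
  moreover have "(\<Sum>k\<in>{1..<K-1}. ?V) = real (K-2) * ?V"
    by (simp add: numeral_2_eq_2)
  ultimately have "real (K-2) * ?V + (1+p) * ?V < ?L * (1-p)" using up by linarith
  moreover have "real (K-2) * ?V + (1+p) * ?V = ?L * (1-p)"
  proof -
    have "real (K-2) + (1+p) = real K - 1 + p" using K by (simp add: of_nat_diff)
    then have "real (K-2) * ?V + (1+p) * ?V = (real K - 1 + p) * ?V" by (metis distrib_right)
    then show ?thesis using pos by simp
  qed
  ultimately show False by simp
qed



theorem mainTheorem8:
  fixes K :: nat and p :: real
  assumes "K \<ge> 2" and "0 < p" and "p < 1"
  shows "(SUP lam\<in>distributions K. INF \<sigma>\<in>nonid_perms K. KL_lam K lam (OA p id) (OA p \<sigma>))
            = ln (1 / p) * ((1 - p) / (real K - 1 + p))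
       \<and> lam_star K p \<in> distributions K
       \<and> (INF \<sigma>\<in>nonid_perms K. KL_lam K (lam_star K p) (OA p id) (OA p \<sigma>))
            = ln (1 / p) * ((1 - p) / (real K - 1 + p))"
proof -
  note K = assms(1) and p = assms(2,3)
  let ?V = "ln (1 / p) * ((1 - p) / (real K - 1 + p))"
  have fin: "finite (nonid_perms K)"
    by (rule finite_subset[OF _ finite_permutations[of "{1..K}"]]) (auto simp: nonid_perms_def)
  have t1: "tau 1 \<in> nonid_perms K" using K by (intro tau_nonid) auto
  then have ne: "nonid_perms K \<noteq> {}" by blast
  have bdd: "\<And>lam. bdd_below ((\<lambda>\<sigma>. KL_lam K lam (OA p id) (OA p \<sigma>)) ` nonid_perms K)"
    using fin by (intro bdd_below_finite) auto
  have ls: "lam_star K p \<in> distributions K" by (rule lamstar_dist[OF K p])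
  have inf_star: "(INF \<sigma>\<in>nonid_perms K. KL_lam K (lam_star K p) (OA p id) (OA p \<sigma>)) = ?V"
  proof (rule antisym)
    have "(INF \<sigma>\<in>nonid_perms K. KL_lam K (lam_star K p) (OA p id) (OA p \<sigma>))
        \<le> KL_lam K (lam_star K p) (OA p id) (OA p (tau 1))"
      by (rule cINF_lower[OF bdd t1])
    also have "\<dots> = ?V" using K by (intro D_star_tau p) auto
    finally show "(INF \<sigma>\<in>nonid_perms K. KL_lam K (lam_star K p) (OA p id) (OA p \<sigma>)) \<le> ?V" .
  next
    show "?V \<le> (INF \<sigma>\<in>nonid_perms K. KL_lam K (lam_star K p) (OA p id) (OA p \<sigma>))"
    proof (rule cINF_greatest[OF ne])
      fix \<sigma> assume s: "\<sigma> \<in> nonid_perms K"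
      obtain k where k: "1 \<le> k" "k < K"
        "KL_lam K (lam_star K p) (OA p id) (OA p (tau k)) \<le> KL_lam K (lam_star K p) (OA p id) (OA p \<sigma>)"
        using lower[OF ls s p] by blast
      then show "?V \<le> KL_lam K (lam_star K p) (OA p id) (OA p \<sigma>)"
        using D_star_tau[OF k(1,2) p K] by simp
    qed
  qed
  have inf_le: "\<And>lam. lam \<in> distributions K \<Longrightarrow>
      (INF \<sigma>\<in>nonid_perms K. KL_lam K lam (OA p id) (OA p \<sigma>)) \<le> ?V"
  proof -
    fix lam assume lam: "lam \<in> distributions K"
    obtain k where k: "1 \<le> k" "k < K" "KL_lam K lam (OA p id) (OA p (tau k)) \<le> ?V"
      using upper[OF lam K p] by blast
    have "(INF \<sigma>\<in>nonid_perms K. KL_lam K lam (OA p id) (OA p \<sigma>)) \<le> KL_lam K lam (OA p id) (OA p (tau k))"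
      by (rule cINF_lower[OF bdd tau_nonid[OF k(1,2)]])
    then show "(INF \<sigma>\<in>nonid_perms K. KL_lam K lam (OA p id) (OA p \<sigma>)) \<le> ?V" using k(3) by simp
  qed
  have "(SUP lam\<in>distributions K. INF \<sigma>\<in>nonid_perms K. KL_lam K lam (OA p id) (OA p \<sigma>)) = ?V"
  proof (rule antisym)
    show "(SUP lam\<in>distributions K. INF \<sigma>\<in>nonid_perms K. KL_lam K lam (OA p id) (OA p \<sigma>)) \<le> ?V"
      using ls by (intro cSUP_least inf_le) auto
  next
    have "bdd_above ((\<lambda>lam. INF \<sigma>\<in>nonid_perms K. KL_lam K lam (OA p id) (OA p \<sigma>)) ` distributions K)"
      using inf_le by (intro bdd_aboveI2) 
    then have "(INF \<sigma>\<in>nonid_perms K. KL_lam K (lam_star K p) (OA p id) (OA p \<sigma>))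
      \<le> (SUP lam\<in>distributions K. INF \<sigma>\<in>nonid_perms K. KL_lam K lam (OA p id) (OA p \<sigma>))"
      by (intro cSUP_upper ls)
    then show "?V \<le> (SUP lam\<in>distributions K. INF \<sigma>\<in>nonid_perms K. KL_lam K lam (OA p id) (OA p \<sigma>))"
      using inf_star by simp
  qed
  then show ?thesis using ls inf_star by simp
qed

end
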